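(* Let $\Psi=\langle\mathcal{S},\mathcal{P},\mathcal{T}\rangle$ be an SPL with internally consistent (e.g. canonical) traceability relation, let $f\in\mathcal{F}$ and $c_k\in\mathcal{C}$. Then $c_k$ is critical for $f$ if and only if the quantified Boolean formula $\forall c'_1\cdots c'_n\,\{[\,C_I(c'_1,\dots,c'_n)\wedge f\_implements(c'_1,\dots,c'_n,f)\,]\Rightarrow c'_k\}$ is true.
   Context: $\mathcal{C}=\{c_1,\dots,c_n\}$ components, $\mathcal{F}$ features, platform $\mathcal{P}\subseteq\mathcal{P}ow(\mathcal{C})$, $\mathcal{T}=\langle prov,req\rangle$ with $prov,req:\mathcal{F}\to\mathcal{P}ow(\mathcal{P}ow(\mathcal{C}))$. $implements(C,f)$ iff $\exists C_1\in prov(f),C_2\in req(f)$ with $C_2\subseteq C_1\subseteq C$. A component $c$ is critical for $f$ if for all $C\in\mathcal{P}$, $c\notin C$ implies $\neg implements(C,f)$. Internally consistent: for every $f$ and $C\in prov(f)$ there is $C'\in req(f)$ with $C'\subseteq C$. With Boolean variables $c_1,\dots,c_n$: $formula\_prov(f)=\bigvee_{S\in prov(f)}\bigwedge_{c_i\in S}c_i$ (FALSE if $prov(f)=\emptyset$); $f\_implements(c'_1,\dots,c'_n,f)=\forall c_1\cdots c_n\{[\bigwedge_i(c'_i\Rightarrow c_i)]\Rightarrow formula\_prov(f)\}$ (inner bound variables distinct from $c'_i$). $C_I(c'_1,\dots,c'_n)=\bigvee_{A\in\mathcal{P}}\bigwedge_{i=1}^n\ell^A_i$ with $\ell^A_i=c'_i$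 if $c_i\in A$ and $\neg c'_i$ otherwise, so $C_I(c')$ holds iff $c'$ is the characteristic vector of some $A\in\mathcal{P}$. *)

theory Defs
  imports Main
begin

(* An SPL over a finite component set Comp = {c_1,...,c_n}; features of type 'f.
   Platform P : set of products (subsets of Comp).
   Traceability T = <prov, req>, prov, req : 'f => 'c set set. *)

definition implements :: "('f \<Rightarrow> 'c set set) \<Rightarrow> ('f \<Rightarrow> 'c set set) \<Rightarrow> 'c set \<Rightarrow> 'f \<Rightarrow> bool" where
  "implements prov req C f \<longleftrightarrow> (\<exists>C1\<in>prov f. \<exists>C2\<in>req f. C2 \<subseteq> C1 \<and> C1 \<subseteq> C)"

definition critical :: "'c set set \<Rightarrow> ('f \<Rightarrow> 'c set set) \<Rightarrow> ('f \<Rightarrow> 'c set set) \<Rightarrow> 'c \<Rightarrow> 'f \<Rightarrow> bool" where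
  "critical P prov req c f \<longleftrightarrow> (\<forall>C\<in>P. c \<notin> C \<longrightarrow> \<not> implements prov req C f)"

definition internally_consistent :: "('f \<Rightarrow> 'c set set) \<Rightarrow> ('f \<Rightarrow> 'c set set) \<Rightarrow> bool" where
  "internally_consistent prov req \<longleftrightarrow> (\<forall>f. \<forall>C\<in>prov f. \<exists>C'\<in>req f. C' \<subseteq> C)"

(* Boolean encodings: an assignment to the variables c_1..c_n is a function
   v :: 'c => bool (only its values on Comp matter). *)

definition formula_prov :: "('f \<Rightarrow> 'c set set) \<Rightarrow> 'f \<Rightarrow> ('c \<Rightarrow> bool) \<Rightarrow> bool" where
  "formula_prov prov f v \<longleftrightarrow> (\<exists>S\<in>prov f. \<forall>c\<in>S. v c)"

definition f_implements :: "'c set \<Rightarrow> ('f \<Rightarrow> 'c set set) \<Rightarrow> ('c \<Rightarrow> bool) \<Rightarrow> 'f \<Rightarrow> bool" where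
  "f_implements Comp prov v' f \<longleftrightarrow>
     (\<forall>v::'c \<Rightarrow> bool. (\<forall>c\<in>Comp. v' c \<longrightarrow> v c) \<longrightarrow> formula_prov prov f v)"

definition C_I :: "'c set \<Rightarrow> 'c set set \<Rightarrow> ('c \<Rightarrow> bool) \<Rightarrow> bool" where
  "C_I Comp P v' \<longleftrightarrow> (\<exists>A\<in>P. \<forall>c\<in>Comp. (v' c \<longleftrightarrow> c \<in> A))"

end

theory Submission
  imports Defs
begin

lemma key:
  assumes A: "A \<subseteq> Comp" and pv: "\<And>g. prov g \<subseteq> Pow Comp"
    and ic: "internally_consistent prov req"
    and v: "\<forall>c\<in>Comp. v' c \<longleftrightarrow> c \<in> A"
  shows "f_implements Comp prov v' f \<longleftrightarrow> implements prov req A f"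
proof
  assume "f_implements Comp prov v' f"
  hence "formula_prov prov f (\<lambda>c. c \<in> A)" unfolding f_implements_def using v by auto
  then obtain S where S: "S \<in> prov f" "S \<subseteq> A" unfolding formula_prov_def by auto
  then obtain C' where "C' \<in> req f" "C' \<subseteq> S" using ic unfolding internally_consistent_def by blast
  thus "implements prov req A f" unfolding implements_def using S by blast
next
  assume "implements prov req A f"
  then obtain S where S: "S \<in> prov f" "S \<subseteq> A" unfolding implements_def by blast
  have "S \<subseteq> Comp" using pv S(1) by blast
  show "f_implements Comp prov v' f" unfolding f_implements_def formula_prov_def
  proof (intro allI impI)
    fix w assume "\<forall>c\<in>Comp. v' c \<longrightarrow> w c"
    hence "\<forall>c\<in>S. w c" using v S(2) \<open>S \<subseteq> Comp\<close> by blast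
    thus "\<exists>S\<in>prov f. \<forall>c\<in>S. w c" using S(1) by blast
  qed
qed

theorem mainTheorem9:
  fixes Comp :: "'c set" and P :: "'c set set"
    and prov req :: "'f \<Rightarrow> 'c set set" and f :: 'f and ck :: 'c
  assumes "finite Comp"
    and "P \<subseteq> Pow Comp"
    and "\<And>g. prov g \<subseteq> Pow Comp"
    and "\<And>g. req g \<subseteq> Pow Comp"
    and "internally_consistent prov req"
    and "ck \<in> Comp"
  shows "critical P prov req ck f \<longleftrightarrow>
         (\<forall>v'::'c \<Rightarrow> bool. (C_I Comp P v' \<and> f_implements Comp prov v' f) \<longrightarrow> v' ck)"
proof
  assume cr: "critical P prov req ck f"
  show "\<forall>v'. (C_I Comp P v' \<and> f_implements Comp prov v' f) \<longrightarrow> v' ck"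
  proof (intro allI impI)
    fix v' assume h: "C_I Comp P v' \<and> f_implements Comp prov v' f"
    then obtain A where A: "A \<in> P" "\<forall>c\<in>Comp. v' c \<longleftrightarrow> c \<in> A" unfolding C_I_def by blast
    have "A \<subseteq> Comp" using A(1) assms(2) by blast
    hence "implements prov req A f" using key[OF _ assms(3) assms(5) A(2)] h by blast
    hence "ck \<in> A" using cr A(1) unfolding critical_def by blast
    thus "v' ck" using A(2) assms(6) by blast
  qed
next
  assume R: "\<forall>v'. (C_I Comp P v' \<and> f_implements Comp prov v' f) \<longrightarrow> v' ck"
  show "critical P prov req ck f" unfolding critical_def
  proof (intro ballI impI notI)
    fix C assume C: "C \<in> P" "ck \<notin> C" "implements prov req C f"
    have Cs: "C \<subseteq> Comp" using C(1) assms(2) by blast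
    have v: "\<forall>c\<in>Comp. (\<lambda>c. c \<in> C) c \<longleftrightarrow> c \<in> C" by simp
    have "C_I Comp P (\<lambda>c. c \<in> C)" unfolding C_I_def using C(1) by blast
    moreover have "f_implements Comp prov (\<lambda>c. c \<in> C) f"
      using key[OF Cs assms(3) assms(5) v] C(3) by blast
    ultimately show False using R C(2) by blast
  qed
qed

end
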